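(* Let $0<\alpha<1$, $T>0$, $N\ge1$, and let $\beta_0,\beta_1,\dots,\beta_N>0$ and $\tau_1,\dots,\tau_N>0$. Let $f:[0,T]\to\mathbb{R}$ with $f\in W^{3,\infty}(0,T)$. Divide $[0,T]$ into $N_T$ equal steps of size $\Delta_t=T/N_T$ with $t_n=n\Delta_t$ and $f^n=f(t_n)$. Define the Caputo derivative $$D_t^\alpha f=\frac{1}{\Gamma(1-\alpha)}\int_0^t\frac{f'(s)}{(t-s)^\alpha}\,ds,$$ for $k=1,\dots,N$ let $q_k(t)=\int_0^t\beta_k\exp[(s-t)/\tau_k]f'(s)\,ds$, define $q_k^0=q_k(0)$ and $q_k^n=e_k^2q_k^{n-1}+e_k\beta_k(f^n-f^{n-1})$ for $n\ge1$ with $e_k=\exp[-\Delta_t/(2\tau_k)]$, and set $$\hat{\mathrm D}_n^\alpha f=\frac{\beta_0}{\Delta_t}(f^n-f^{n-1})+\sum_{k=1}^N q_k^n.$$ Let $$\varepsilon(z)=\frac{z^{1-\alpha}}{\Gamma(2-\alpha)}-\beta_0+\sum_{k=1}^N\beta_k\tau_k\big(\exp(-z/\tau_k)-1\big),\qquad z\in[0,T].$$ Then for any $t_n\in\{t_1,\dots,t_{N_T}\}$ $$\big|\hat{\mathrm D}_n^\alpha f-D_{t_n}^\alpha f\big|\le\|\varepsilon\|_{L^\infty(0,T)}\Big[|f'(0)|+\|f''\|_{L^1(0,T)}\Big]+\Delta_t\big(\beta_0/2+C(\boldsymbol\beta,\boldsymbol\tau)\Delta_t\big)\|f\|_{W^{3,\infty}(0,T)},$$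 where $C(\boldsymbol\beta,\boldsymbol\tau)>0$ is a constant depending on the chosen $\beta_k,\tau_k$, $k=1,\dots,N$.
   Context: $\Gamma$ is the Gamma function. $W^{3,\infty}(0,T)$ is the Sobolev space of functions whose derivatives up to order $3$ are essentially bounded, with norm $\|f\|_{W^{3,\infty}(0,T)}$ controlling the $L^\infty$ norms of $f,f',f'',f'''$; $\|\cdot\|_{L^\infty(0,T)}$, $\|\cdot\|_{L^1(0,T)}$ are the usual norms. $\boldsymbol\beta=(\beta_1,\dots,\beta_N)$, $\boldsymbol\tau=(\tau_1,\dots,\tau_N)$. *)

theory Defs
  imports "HOL-Analysis.Analysis"
begin

text \<open>Sup norm on [0,T] (for continuous functions this is the L-infinity norm;
  for the third derivative, quantifying over all representatives makes it the essential sup).\<close>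
definition Linf_norm :: "real \<Rightarrow> (real \<Rightarrow> real) \<Rightarrow> real" where
  "Linf_norm T g = (SUP x\<in>{0..T}. \<bar>g x\<bar>)"

definition L1_norm :: "real \<Rightarrow> (real \<Rightarrow> real) \<Rightarrow> real" where
  "L1_norm T g = integral {0..T} (\<lambda>s. \<bar>g s\<bar>)"

definition W3inf_norm :: "real \<Rightarrow> (real \<Rightarrow> real) \<Rightarrow> (real \<Rightarrow> real) \<Rightarrow> (real \<Rightarrow> real) \<Rightarrow> (real \<Rightarrow> real) \<Rightarrow> real" where
  "W3inf_norm T f f1 f2 f3 =
     max (max (Linf_norm T f) (Linf_norm T f1)) (max (Linf_norm T f2) (Linf_norm T f3))"

definition caputo :: "real \<Rightarrow> (real \<Rightarrow> real) \<Rightarrow> real \<Rightarrow> real" where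
  "caputo \<alpha> f1 t = 1 / Gamma (1 - \<alpha>) * integral {0..t} (\<lambda>s. f1 s / (t - s) powr \<alpha>)"

definition qexact :: "real \<Rightarrow> real \<Rightarrow> (real \<Rightarrow> real) \<Rightarrow> real \<Rightarrow> real" where
  "qexact \<beta>k \<tau>k f1 t = integral {0..t} (\<lambda>s. \<beta>k * exp ((s - t) / \<tau>k) * f1 s)"

primrec qdisc :: "real \<Rightarrow> real \<Rightarrow> real \<Rightarrow> (real \<Rightarrow> real) \<Rightarrow> real \<Rightarrow> nat \<Rightarrow> real" where
  "qdisc \<beta>k \<tau>k dt f q0 0 = q0"
| "qdisc \<beta>k \<tau>k dt f q0 (Suc n) =
     (exp (- dt / (2 * \<tau>k)))\<^sup>2 * qdisc \<beta>k \<tau>k dt f q0 n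
     + exp (- dt / (2 * \<tau>k)) * \<beta>k * (f (real (Suc n) * dt) - f (real n * dt))"

definition Dhat :: "nat \<Rightarrow> (nat \<Rightarrow> real) \<Rightarrow> (nat \<Rightarrow> real) \<Rightarrow> real \<Rightarrow> (real \<Rightarrow> real) \<Rightarrow> (real \<Rightarrow> real) \<Rightarrow> nat \<Rightarrow> real" where
  "Dhat N \<beta> \<tau> dt f f1 n =
     \<beta> 0 / dt * (f (real n * dt) - f (real (n - 1) * dt))
     + (\<Sum>k=1..N. qdisc (\<beta> k) (\<tau> k) dt f (qexact (\<beta> k) (\<tau> k) f1 0) n)"

definition eps :: "real \<Rightarrow> nat \<Rightarrow> (nat \<Rightarrow> real) \<Rightarrow> (nat \<Rightarrow> real) \<Rightarrow> real \<Rightarrow> real" where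
  "eps \<alpha> N \<beta> \<tau> z = z powr (1 - \<alpha>) / Gamma (2 - \<alpha>) - \<beta> 0
     + (\<Sum>k=1..N. \<beta> k * \<tau> k * (exp (- z / \<tau> k) - 1))"

end

theory Submission
  imports Defs
begin
lemma Linf_ge:
  assumes "continuous_on {0..T} g" "x \<in> {0..T}"
  shows "\<bar>g x\<bar> \<le> Linf_norm T g"
proof -
  have "compact ((\<lambda>x. \<bar>g x\<bar>) ` {0..T})"
    by (intro compact_continuous_image continuous_intros assms) simp
  hence "bdd_above ((\<lambda>x. \<bar>g x\<bar>) ` {0..T})" by (meson bounded_imp_bdd_above compact_imp_bounded)
  thus ?thesis unfolding Linf_norm_def using assms(2) by (intro cSUP_upper) auto
qed

lemma exp_taylor2:
  fixes d :: real assumes "\<bar>d\<bar> \<le> 1"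
  shows "\<bar>exp d - 1 - d\<bar> \<le> d\<^sup>2"
proof (cases "d \<ge> 0")
  case True
  have "exp d \<ge> 1 + d" by (rule exp_ge_add_one_self)
  moreover have "d\<^sup>2 \<ge> 0" by simp
  moreover have "exp d - 1 - d \<le> d\<^sup>2" using exp_bound[of d] True assms by simp
  ultimately have "-(exp d - 1 - d) \<le> d\<^sup>2" by linarith
  with \<open>exp d - 1 - d \<le> d\<^sup>2\<close> show ?thesis by (simp only: abs_le_iff)
next
  case False
  define x where "x = - d"
  have x: "0 < x" "x \<le> 1" using False assms x_def by auto
  have e: "exp d * exp x = 1" by (simp add: x_def flip: exp_add)
  have "exp x \<ge> 1 + x" by (rule exp_ge_add_one_self)
  have "exp d * (1 + x) \<le> exp d * exp x"
    by (rule mult_left_mono) (use \<open>exp x \<ge> 1 + x\<close> in auto)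
  hence "exp d * (1 + x) \<le> 1" using e by simp
  moreover have "(1 - x + x\<^sup>2) * (1 + x) = 1 + x^3" by (simp add: algebra_simps power2_eq_square power3_eq_cube)
  moreover have "x^3 \<ge> 0" using x by simp
  ultimately have "exp d * (1 + x) \<le> (1 - x + x\<^sup>2) * (1 + x)" by linarith
  hence "exp d \<le> 1 - x + x\<^sup>2" by (rule mult_right_le_imp_le) (use x in simp)
  moreover have "exp d \<ge> 1 + d" by (rule exp_ge_add_one_self)
  moreover have "x\<^sup>2 = d\<^sup>2" by (simp add: x_def)
  ultimately have "exp d - 1 - d \<le> d\<^sup>2" "-(exp d - 1 - d) \<le> d\<^sup>2" using x_def by linarith+
  then show ?thesis by (simp only: abs_le_iff)
qed


lemma mvt_within:
  fixes g g' :: "real \<Rightarrow> real"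
  assumes "\<forall>x\<in>{0..T}. (g has_real_derivative g' x) (at x within {0..T})"
    "0 \<le> a" "a \<le> b" "b \<le> T"
  shows "\<exists>z\<in>{a..b}. g b - g a = g' z * (b - a)"
proof -
  have "\<And>z. a \<le> z \<Longrightarrow> z \<le> b \<Longrightarrow> (g has_derivative (\<lambda>h. g' z * h)) (at z within {a..b})"
  proof -
    fix z assume z: "a \<le> z" "z \<le> b"
    have "(g has_real_derivative g' z) (at z within {0..T})" using assms z by auto
    hence "(g has_real_derivative g' z) (at z within {a..b})"
      by (rule DERIV_subset) (use assms in auto)
    thus "(g has_derivative (\<lambda>h. g' z * h)) (at z within {a..b})"
      by (simp add: has_field_derivative_def)
  qed
  from mvt_very_simple[OF assms(3) this] show ?thesis by auto
qed

lemma deriv_lipschitz: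
  fixes g g' :: "real \<Rightarrow> real"
  assumes d: "\<forall>x\<in>{0..T}. (g has_real_derivative g' x) (at x within {0..T})"
    and M: "\<forall>x\<in>{0..T}. \<bar>g' x\<bar> \<le> M" and xy: "x \<in> {0..T}" "y \<in> {0..T}"
  shows "\<bar>g x - g y\<bar> \<le> M * \<bar>x - y\<bar>"
proof -
  have *: "\<bar>g b - g a\<bar> \<le> M * \<bar>b - a\<bar>" if "a \<in> {0..T}" "b \<in> {0..T}" "a \<le> b" for a b
  proof -
    have "\<exists>z\<in>{a..b}. g b - g a = g' z * (b - a)"
      by (rule mvt_within[OF d]) (use that in auto)
    then obtain z where z: "z \<in> {a..b}" "g b - g a = g' z * (b - a)" by blast
    have "\<bar>g' z\<bar> \<le> M" using M z that by auto
    hence "\<bar>g' z\<bar> * \<bar>b - a\<bar> \<le> M * \<bar>b - a\<bar>" by (rule mult_right_mono) simp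
    thus ?thesis using z by (simp add: abs_mult)
  qed
  show ?thesis
  proof (cases "y \<le> x")
    case True thus ?thesis using *[of y x] xy by simp
  next
    case False thus ?thesis using *[of x y] xy by (simp add: abs_minus_commute)
  qed
qed

lemma taylor1:
  fixes f f1 f2 :: "real \<Rightarrow> real"
  assumes d1: "\<forall>x\<in>{0..T}. (f has_real_derivative f1 x) (at x within {0..T})"
    and d2: "\<forall>x\<in>{0..T}. (f1 has_real_derivative f2 x) (at x within {0..T})"
    and M: "\<forall>x\<in>{0..T}. \<bar>f2 x\<bar> \<le> M" and ab: "0 \<le> a" "a \<le> b" "b \<le> T"
  shows "\<bar>f b - f a - (b - a) * f1 b\<bar> \<le> M * (b - a)\<^sup>2 / 2"
proof -
  have M0: "0 \<le> M" using M ab by (meson abs_ge_zero atLeastAtMost_iff order_trans)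
  have lip: "\<bar>f1 x - f1 b\<bar> \<le> M * (b - x)" if "x \<in> {a..b}" for x
    using deriv_lipschitz[OF d2 M, of x b] that ab by auto
  define h1 where "h1 x = f x - x * f1 b - M / 2 * (b - x)\<^sup>2" for x
  define h2 where "h2 x = f x - x * f1 b + M / 2 * (b - x)\<^sup>2" for x
  have dh1: "\<forall>x\<in>{0..T}. (h1 has_real_derivative (f1 x - f1 b + M * (b - x))) (at x within {0..T})"
  proof
    fix x assume x: "x \<in> {0..T}"
    show "(h1 has_real_derivative (f1 x - f1 b + M * (b - x))) (at x within {0..T})"
      unfolding h1_def[abs_def] using x
      by (auto intro!: derivative_eq_intros d1[rule_format, OF x] simp: field_simps)
  qed
  have dh2: "\<forall>x\<in>{0..T}. (h2 has_real_derivative (f1 x - f1 b - M * (b - x))) (at x within {0..T})"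
  proof
    fix x assume x: "x \<in> {0..T}"
    show "(h2 has_real_derivative (f1 x - f1 b - M * (b - x))) (at x within {0..T})"
      unfolding h2_def[abs_def] using x
      by (auto intro!: derivative_eq_intros d1[rule_format, OF x] simp: field_simps)
  qed
  obtain z1 where z1: "z1 \<in> {a..b}" "h1 b - h1 a = (f1 z1 - f1 b + M * (b - z1)) * (b - a)"
    using mvt_within[OF dh1 ab] by auto
  obtain z2 where z2: "z2 \<in> {a..b}" "h2 b - h2 a = (f1 z2 - f1 b - M * (b - z2)) * (b - a)"
    using mvt_within[OF dh2 ab] by auto
  have "h1 b - h1 a \<ge> 0" using z1 lip[OF z1(1)] ab by (simp add: abs_le_iff)
  moreover have "f1 z2 - f1 b - M * (b - z2) \<le> 0" using lip[OF z2(1)] by (simp add: abs_le_iff)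
  hence "h2 b - h2 a \<le> 0" using z2(2) ab by (simp add: mult_nonpos_nonneg)
  moreover have "h1 b - h1 a = (f b - f a - (b - a) * f1 b) + M * (b - a)\<^sup>2 / 2"
    unfolding h1_def by (simp add: field_simps power2_eq_square)
  moreover have "h2 b - h2 a = (f b - f a - (b - a) * f1 b) - M * (b - a)\<^sup>2 / 2"
    unfolding h2_def by (simp add: field_simps power2_eq_square)
  ultimately show ?thesis unfolding abs_le_iff by linarith
qed

lemma ibp_kernel:
  fixes f1 f2 Phi phi :: "real \<Rightarrow> real"
  assumes d2: "\<forall>x\<in>{0..T}. (f1 has_real_derivative f2 x) (at x within {0..T})"
    and cf2: "continuous_on {0..T} f2"
    and t: "0 < t" "t \<le> T"
    and cPhi: "continuous_on {0..t} Phi"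
    and dPhi: "\<And>z. z \<in> {0<..<t} \<Longrightarrow> (Phi has_real_derivative phi z) (at z)"
  shows "((\<lambda>s. f1 s * phi (t - s)) has_integral
          (f1 0 * Phi t - f1 t * Phi 0 + integral {0..t} (\<lambda>s. f2 s * Phi (t - s)))) {0..t}"
proof -
  have sub: "{0..t} \<subseteq> {0..T}" using t by auto
  have cf1: "continuous_on {0..t} f1"
    using DERIV_continuous_on[of "{0..T}" f1 f2] d2 continuous_on_subset sub by blast
  have cf2': "continuous_on {0..t} f2" using cf2 continuous_on_subset sub by blast
  have cPhi': "continuous_on {0..t} (\<lambda>s. Phi (t - s))"
    by (rule continuous_on_compose2[OF cPhi]) (auto intro!: continuous_intros)
  define F where "F s = - (f1 s * Phi (t - s))" for s
  have cF: "continuous_on {0..t} F" unfolding F_def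
    by (intro continuous_intros cf1 cPhi')
  have dF: "(F has_vector_derivative (f1 s * phi (t - s) - f2 s * Phi (t - s))) (at s)"
    if s: "s \<in> {0<..<t}" for s
  proof -
    have "s \<in> interior {0..T}" using s t by auto
    hence e: "at s within {0..T} = at s" by (rule at_within_interior)
    have "(f1 has_real_derivative f2 s) (at s within {0..T})" using d2 s t by auto
    hence df1: "(f1 has_real_derivative f2 s) (at s)" by (simp only: e)
    have "t - s \<in> {0<..<t}" using s by auto
    hence dP: "((\<lambda>s. Phi (t - s)) has_real_derivative (phi (t - s) * (-1))) (at s)"
      by (intro DERIV_chain2[OF dPhi]) (auto intro!: derivative_eq_intros)
    have "(F has_real_derivative -(f2 s * Phi (t - s) + phi (t - s) * -1 * f1 s)) (at s)"
      unfolding F_def[abs_def] by (rule DERIV_minus[OF DERIV_mult[OF df1 dP]])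
    hence "(F has_real_derivative (f1 s * phi (t - s) - f2 s * Phi (t - s))) (at s)"
      by (simp add: algebra_simps)
    thus ?thesis by (simp add: has_real_derivative_iff_has_vector_derivative)
  qed
  have I1: "((\<lambda>s. f1 s * phi (t - s) - f2 s * Phi (t - s)) has_integral (F t - F 0)) {0..t}"
    by (rule fundamental_theorem_of_calculus_interior[OF _ cF dF]) (use t in auto)
  have I2: "((\<lambda>s. f2 s * Phi (t - s)) has_integral integral {0..t} (\<lambda>s. f2 s * Phi (t - s))) {0..t}"
    by (intro integrable_integral integrable_continuous_real continuous_intros cf2' cPhi')
  have "((\<lambda>s. (f1 s * phi (t - s) - f2 s * Phi (t - s)) + f2 s * Phi (t - s)) has_integral
        (F t - F 0 + integral {0..t} (\<lambda>s. f2 s * Phi (t - s)))) {0..t}"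
    by (rule has_integral_add[OF I1 I2])
  thus ?thesis by (simp add: F_def algebra_simps)
qed

lemma caputo_ibp:
  fixes f1 f2 :: "real \<Rightarrow> real"
  assumes d2: "\<forall>x\<in>{0..T}. (f1 has_real_derivative f2 x) (at x within {0..T})"
    and cf2: "continuous_on {0..T} f2"
    and t: "0 < t" "t \<le> T" and a: "0 < \<alpha>" "\<alpha> < 1"
  shows "caputo \<alpha> f1 t = f1 0 * (t powr (1 - \<alpha>) / Gamma (2 - \<alpha>))
           + integral {0..t} (\<lambda>s. f2 s * ((t - s) powr (1 - \<alpha>) / Gamma (2 - \<alpha>)))"
proof -
  define Phi where "Phi z = z powr (1 - \<alpha>) / Gamma (2 - \<alpha>)" for z
  define phi where "phi z = 1 / Gamma (1 - \<alpha>) / z powr \<alpha>" for z :: real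
  have nI: "1 - \<alpha> \<notin> \<int>\<^sub>\<le>\<^sub>0" using a by (auto elim!: nonpos_Ints_cases)
  have G2: "Gamma (2 - \<alpha>) = (1 - \<alpha>) * Gamma (1 - \<alpha>)"
    using Gamma_plus1[OF nI] by (simp add: algebra_simps)
  have Gpos: "Gamma (1 - \<alpha>) > 0" using a by simp
  have G2pos: "Gamma (2 - \<alpha>) > 0" using a by (intro Gamma_real_pos) simp
  have "continuous_on {0..t} (\<lambda>z. z powr (1 - \<alpha>))"
    by (rule continuous_on_powr') (use a in \<open>auto intro: continuous_intros\<close>)
  hence cPhi: "continuous_on {0..t} Phi" unfolding Phi_def
    by (intro continuous_on_divide continuous_on_const) (use G2pos in auto)
  have dPhi: "(Phi has_real_derivative phi z) (at z)" if z: "z \<in> {0<..<t}" for z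
  proof -
    have "((\<lambda>z. z powr (1 - \<alpha>)) has_real_derivative (1 - \<alpha>) * z powr (1 - \<alpha> - 1)) (at z)"
      by (rule has_real_derivative_powr) (use z in auto)
    hence "(Phi has_real_derivative (1 - \<alpha>) * z powr (1 - \<alpha> - 1) / Gamma (2 - \<alpha>)) (at z)"
      unfolding Phi_def[abs_def] by (rule DERIV_cdivide)
    moreover have "(1 - \<alpha>) * z powr (1 - \<alpha> - 1) / Gamma (2 - \<alpha>) = phi z"
    proof -
      have pz: "z powr (1 - \<alpha> - 1) = 1 / z powr \<alpha>" using z by (simp add: powr_minus_divide)
      have gen: "(1 - \<alpha>) * (1 / w) / ((1 - \<alpha>) * Gamma (1 - \<alpha>)) = 1 / Gamma (1 - \<alpha>) / w"
        if "w > 0" for w :: real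
      proof -
        have "1 - \<alpha> \<noteq> 0" using a by simp
        hence "(1 - \<alpha>) * (1 / w) / ((1 - \<alpha>) * Gamma (1 - \<alpha>)) = (1 / w) / Gamma (1 - \<alpha>)"
          by (rule mult_divide_mult_cancel_left)
        thus ?thesis by simp
      qed
      have "z powr \<alpha> > 0" using z by simp
      thus ?thesis unfolding phi_def G2 pz using gen by blast
    qed
    ultimately show ?thesis by simp
  qed
  have I: "((\<lambda>s. f1 s * phi (t - s)) has_integral
          (f1 0 * Phi t - f1 t * Phi 0 + integral {0..t} (\<lambda>s. f2 s * Phi (t - s)))) {0..t}"
    by (rule ibp_kernel[OF d2 cf2 t cPhi dPhi])
  have "caputo \<alpha> f1 t = integral {0..t} (\<lambda>s. 1 / Gamma (1 - \<alpha>) * (f1 s / (t - s) powr \<alpha>))"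
    unfolding caputo_def by (rule integral_mult_right[symmetric])
  also have "\<dots> = integral {0..t} (\<lambda>s. f1 s * phi (t - s))"
    unfolding phi_def by (rule integral_cong) simp
  also have "\<dots> = f1 0 * Phi t - f1 t * Phi 0 + integral {0..t} (\<lambda>s. f2 s * Phi (t - s))"
    using I by (rule integral_unique)
  finally show ?thesis unfolding Phi_def by simp
qed

lemma approx_ibp:
  fixes f1 f2 :: "real \<Rightarrow> real" and \<beta> \<tau> :: "nat \<Rightarrow> real"
  assumes d2: "\<forall>x\<in>{0..T}. (f1 has_real_derivative f2 x) (at x within {0..T})"
    and cf2: "continuous_on {0..T} f2"
    and t: "0 < t" "t \<le> T" and tau: "\<forall>k\<in>{1..N}. \<tau> k > 0"
  shows "\<beta> 0 * f1 t + (\<Sum>k=1..N. qexact (\<beta> k) (\<tau> k) f1 t)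
     = f1 0 * (\<beta> 0 + (\<Sum>k=1..N. \<beta> k * \<tau> k * (1 - exp (- t / \<tau> k))))
       + integral {0..t} (\<lambda>s. f2 s * (\<beta> 0 + (\<Sum>k=1..N. \<beta> k * \<tau> k * (1 - exp (- (t - s) / \<tau> k)))))"
proof -
  define Phi where "Phi z = \<beta> 0 + (\<Sum>k=1..N. \<beta> k * \<tau> k * (1 - exp (- z / \<tau> k)))" for z
  define phi where "phi z = (\<Sum>k=1..N. \<beta> k * exp (- z / \<tau> k))" for z
  have tau': "\<And>k. Suc 0 \<le> k \<Longrightarrow> k \<le> N \<Longrightarrow> \<tau> k \<noteq> 0" using tau by force
  have cPhi: "continuous_on {0..t} Phi" unfolding Phi_def
    by (intro continuous_intros) (auto dest: tau')
  have dPhi: "(Phi has_real_derivative phi z) (at z)" for z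
  proof -
    have dk: "((\<lambda>z. \<beta> k * \<tau> k * (1 - exp (- z / \<tau> k))) has_real_derivative \<beta> k * exp (- z / \<tau> k)) (at z)"
      if k: "k \<in> {1..N}" for k
    proof -
      have "\<tau> k > 0" using bspec[OF tau k] .
      hence "\<tau> k \<noteq> 0" by simp
      thus ?thesis by (auto intro!: derivative_eq_intros simp: field_simps)
    qed
    have "((\<lambda>z. \<beta> 0 + (\<Sum>k=1..N. \<beta> k * \<tau> k * (1 - exp (- z / \<tau> k)))) has_real_derivative
           0 + (\<Sum>k=1..N. \<beta> k * exp (- z / \<tau> k))) (at z)"
      by (intro DERIV_add DERIV_const DERIV_sum dk)
    thus ?thesis unfolding Phi_def[abs_def] phi_def by simp
  qed
  have sub: "{0..t} \<subseteq> {0..T}" using t by auto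
  have cf1: "continuous_on {0..t} f1"
    using DERIV_continuous_on[of "{0..T}" f1 f2] d2 continuous_on_subset sub by blast
  have I: "((\<lambda>s. f1 s * phi (t - s)) has_integral
          (f1 0 * Phi t - f1 t * Phi 0 + integral {0..t} (\<lambda>s. f2 s * Phi (t - s)))) {0..t}"
    by (rule ibp_kernel[OF d2 cf2 t cPhi dPhi])
  have "(\<Sum>k=1..N. qexact (\<beta> k) (\<tau> k) f1 t)
      = integral {0..t} (\<lambda>s. \<Sum>k=1..N. \<beta> k * exp ((s - t) / \<tau> k) * f1 s)"
    unfolding qexact_def
    by (rule integral_sum[symmetric]) (auto intro!: integrable_continuous_real continuous_intros cf1 dest: tau')
  also have "\<dots> = integral {0..t} (\<lambda>s. f1 s * phi (t - s))"
    unfolding phi_def by (rule integral_cong) (simp add: sum_distrib_left algebra_simps)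
  also have "\<dots> = f1 0 * Phi t - f1 t * Phi 0 + integral {0..t} (\<lambda>s. f2 s * Phi (t - s))"
    using I by (rule integral_unique)
  finally show ?thesis unfolding Phi_def by simp
qed

lemma eps_eq:
  "eps \<alpha> N \<beta> \<tau> z = z powr (1 - \<alpha>) / Gamma (2 - \<alpha>)
      - (\<beta> 0 + (\<Sum>k=1..N. \<beta> k * \<tau> k * (1 - exp (- z / \<tau> k))))"
proof -
  have "(\<Sum>k=1..N. \<beta> k * \<tau> k * (exp (- z / \<tau> k) - 1)) + (\<Sum>k=1..N. \<beta> k * \<tau> k * (1 - exp (- z / \<tau> k))) = 0"
    by (simp add: sum.distrib[symmetric] algebra_simps)
  thus ?thesis unfolding eps_def by linarith
qed

lemma partA:
  fixes f1 f2 :: "real \<Rightarrow> real" and \<beta> \<tau> :: "nat \<Rightarrow> real"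
  assumes d2: "\<forall>x\<in>{0..T}. (f1 has_real_derivative f2 x) (at x within {0..T})"
    and cf2: "continuous_on {0..T} f2"
    and t: "0 < t" "t \<le> T" and a: "0 < \<alpha>" "\<alpha> < 1" and tau: "\<forall>k\<in>{1..N}. \<tau> k > 0"
    and E: "\<forall>z\<in>{0..T}. \<bar>eps \<alpha> N \<beta> \<tau> z\<bar> \<le> E"
  shows "\<bar>\<beta> 0 * f1 t + (\<Sum>k=1..N. qexact (\<beta> k) (\<tau> k) f1 t) - caputo \<alpha> f1 t\<bar>
          \<le> E * (\<bar>f1 0\<bar> + L1_norm T f2)"
proof -
  define Kf where "Kf z = z powr (1 - \<alpha>) / Gamma (2 - \<alpha>)" for z
  define Pf where "Pf z = \<beta> 0 + (\<Sum>k=1..N. \<beta> k * \<tau> k * (1 - exp (- z / \<tau> k)))" for z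
  have epsKP: "eps \<alpha> N \<beta> \<tau> z = Kf z - Pf z" for z unfolding Kf_def Pf_def by (rule eps_eq)
  have tau': "\<And>k. Suc 0 \<le> k \<Longrightarrow> k \<le> N \<Longrightarrow> \<tau> k \<noteq> 0" using tau by force
  have G2pos: "Gamma (2 - \<alpha>) > 0" using a by (intro Gamma_real_pos) simp
  have sub: "{0..t} \<subseteq> {0..T}" using t by auto
  have cf2': "continuous_on {0..t} f2" using cf2 continuous_on_subset sub by blast
  have cpw: "continuous_on {0..t} (\<lambda>s. (t - s) powr (1 - \<alpha>))"
    by (rule continuous_on_powr') (use a in \<open>auto intro!: continuous_intros\<close>)
  have cK: "continuous_on {0..t} (\<lambda>s. f2 s * Kf (t - s))" unfolding Kf_def
    by (intro continuous_on_mult cf2' continuous_on_divide[OF cpw continuous_on_const]) (use G2pos in auto)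
  have cP: "continuous_on {0..t} (\<lambda>s. f2 s * Pf (t - s))" unfolding Pf_def
    by (intro continuous_intros cf2') (auto dest: tau')
  have iK: "(\<lambda>s. f2 s * Kf (t - s)) integrable_on {0..t}" by (rule integrable_continuous_real[OF cK])
  have iP: "(\<lambda>s. f2 s * Pf (t - s)) integrable_on {0..t}" by (rule integrable_continuous_real[OF cP])
  have iabs: "(\<lambda>s. \<bar>f2 s\<bar>) integrable_on {0..t}"
    by (intro integrable_continuous_real continuous_intros cf2')
  have iabsT: "(\<lambda>s. \<bar>f2 s\<bar>) integrable_on {0..T}"
    by (intro integrable_continuous_real continuous_intros cf2)
  have ieps: "(\<lambda>s. f2 s * Kf (t - s) - f2 s * Pf (t - s)) integrable_on {0..t}"
    by (rule integrable_diff[OF iK iP])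
  have A: "\<beta> 0 * f1 t + (\<Sum>k=1..N. qexact (\<beta> k) (\<tau> k) f1 t)
          = f1 0 * Pf t + integral {0..t} (\<lambda>s. f2 s * Pf (t - s))"
    unfolding Pf_def by (rule approx_ibp[OF d2 cf2 t tau])
  have C: "caputo \<alpha> f1 t = f1 0 * Kf t + integral {0..t} (\<lambda>s. f2 s * Kf (t - s))"
    unfolding Kf_def by (rule caputo_ibp[OF d2 cf2 t a])
  have D: "\<beta> 0 * f1 t + (\<Sum>k=1..N. qexact (\<beta> k) (\<tau> k) f1 t) - caputo \<alpha> f1 t
     = - (f1 0 * eps \<alpha> N \<beta> \<tau> t + integral {0..t} (\<lambda>s. f2 s * Kf (t - s) - f2 s * Pf (t - s)))"
    unfolding A C epsKP integral_diff[OF iK iP] by (simp add: algebra_simps)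
  have E0: "0 \<le> E" using E t by (meson abs_ge_zero atLeastAtMost_iff less_imp_le order_trans order_refl)
  have b1: "\<bar>f1 0 * eps \<alpha> N \<beta> \<tau> t\<bar> \<le> \<bar>f1 0\<bar> * E"
    unfolding abs_mult by (rule mult_left_mono) (use E t in auto)
  have "norm (integral {0..t} (\<lambda>s. f2 s * Kf (t - s) - f2 s * Pf (t - s)))
        \<le> integral {0..t} (\<lambda>s. \<bar>f2 s\<bar> * E)"
  proof (rule integral_norm_bound_integral[OF ieps])
    show "(\<lambda>s. \<bar>f2 s\<bar> * E) integrable_on {0..t}" using iabs by (rule integrable_on_mult_left)
    fix s assume s: "s \<in> {0..t}"
    have "f2 s * Kf (t - s) - f2 s * Pf (t - s) = f2 s * eps \<alpha> N \<beta> \<tau> (t - s)"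
      by (simp add: epsKP algebra_simps)
    moreover have "\<bar>eps \<alpha> N \<beta> \<tau> (t - s)\<bar> \<le> E" using E s t by auto
    ultimately show "norm (f2 s * Kf (t - s) - f2 s * Pf (t - s)) \<le> \<bar>f2 s\<bar> * E"
      by (simp add: abs_mult mult_left_mono)
  qed
  also have "\<dots> = integral {0..t} (\<lambda>s. \<bar>f2 s\<bar>) * E" by simp
  also have "\<dots> \<le> integral {0..T} (\<lambda>s. \<bar>f2 s\<bar>) * E"
    by (rule mult_right_mono[OF integral_subset_le[OF sub iabs iabsT] E0]) auto
  finally have b2: "\<bar>integral {0..t} (\<lambda>s. f2 s * Kf (t - s) - f2 s * Pf (t - s))\<bar> \<le> L1_norm T f2 * E"
    unfolding L1_norm_def by simp
  have cm: "\<bar>f1 0\<bar> * E = E * \<bar>f1 0\<bar>" "L1_norm T f2 * E = E * L1_norm T f2" by simp_all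
  show ?thesis unfolding D using b1 b2 cm abs_triangle_ineq[of "f1 0 * eps \<alpha> N \<beta> \<tau> t" "integral {0..t} (\<lambda>s. f2 s * Kf (t - s) - f2 s * Pf (t - s))"]
    by (simp only: abs_minus_cancel distrib_left)
qed

lemma q_step:
  fixes f1 :: "real \<Rightarrow> real"
  assumes cf1: "continuous_on {0..T} f1" and ab: "0 \<le> a" "a \<le> b" "b \<le> T" and tau: "\<tau>k > 0"
  shows "qexact \<beta>k \<tau>k f1 b = exp (- (b - a) / \<tau>k) * qexact \<beta>k \<tau>k f1 a
           + integral {a..b} (\<lambda>s. \<beta>k * exp ((s - b) / \<tau>k) * f1 s)"
proof -
  have cb: "continuous_on {0..b} f1" using cf1 continuous_on_subset ab by fastforce
  have ib: "(\<lambda>s. \<beta>k * exp ((s - b) / \<tau>k) * f1 s) integrable_on {0..b}"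
    by (intro integrable_continuous_real continuous_intros cb) (use tau in auto)
  have "qexact \<beta>k \<tau>k f1 b = integral {0..a} (\<lambda>s. \<beta>k * exp ((s - b) / \<tau>k) * f1 s)
        + integral {a..b} (\<lambda>s. \<beta>k * exp ((s - b) / \<tau>k) * f1 s)"
    unfolding qexact_def using Henstock_Kurzweil_Integration.integral_combine[OF ab(1,2) ib] by simp
  also have "integral {0..a} (\<lambda>s. \<beta>k * exp ((s - b) / \<tau>k) * f1 s)
      = integral {0..a} (\<lambda>s. exp (- (b - a) / \<tau>k) * (\<beta>k * exp ((s - a) / \<tau>k) * f1 s))"
  proof (rule integral_cong)
    fix s
    have "(s - b) / \<tau>k = - (b - a) / \<tau>k + (s - a) / \<tau>k" by (simp add: diff_divide_distrib)
    hence "exp ((s - b) / \<tau>k) = exp (- (b - a) / \<tau>k) * exp ((s - a) / \<tau>k)" by (simp add: exp_add)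
    thus "\<beta>k * exp ((s - b) / \<tau>k) * f1 s = exp (- (b - a) / \<tau>k) * (\<beta>k * exp ((s - a) / \<tau>k) * f1 s)"
      by simp
  qed
  also have "\<dots> = exp (- (b - a) / \<tau>k) * qexact \<beta>k \<tau>k f1 a"
    unfolding qexact_def by (rule integral_mult_right)
  finally show ?thesis .
qed

lemma lin_helper: "(x::real) \<le> y1 + y2 \<Longrightarrow> y1 \<le> z1 \<Longrightarrow> y2 \<le> z2 \<Longrightarrow> w = z1 + z2 \<Longrightarrow> x \<le> w"
  by linarith

lemma local_err:
  fixes f f1 f2 :: "real \<Rightarrow> real"
  assumes d1: "\<forall>x\<in>{0..T}. (f has_real_derivative f1 x) (at x within {0..T})"
    and d2: "\<forall>x\<in>{0..T}. (f1 has_real_derivative f2 x) (at x within {0..T})"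
    and M1: "\<forall>x\<in>{0..T}. \<bar>f1 x\<bar> \<le> M1" and M2: "\<forall>x\<in>{0..T}. \<bar>f2 x\<bar> \<le> M2"
    and ab: "0 \<le> a" "a < b" "b \<le> T" and tau: "\<tau>k > 0" and bk: "\<beta>k > 0"
  shows "\<bar>integral {a..b} (\<lambda>s. \<beta>k * exp ((s - b) / \<tau>k) * f1 s)
           - exp (- (b - a) / (2 * \<tau>k)) * \<beta>k * (f b - f a)\<bar>
         \<le> \<beta>k * (if b - a \<le> 2 * \<tau>k then (M1 / \<tau>k\<^sup>2 + M2 / \<tau>k) * (b - a) ^ 3 else (b - a) * M1)"
proof -
  define h where "h = b - a"
  define m where "m = (a + b) / 2"
  define e where "e = exp (- h / (2 * \<tau>k))"
  have h0: "h > 0" using ab h_def by simp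
  have "0 \<le> h / (2 * \<tau>k)" using h0 tau by simp
  hence e01: "0 < e" "e \<le> 1" unfolding e_def by simp_all
  have sub: "{a..b} \<subseteq> {0..T}" using ab by auto
  have "\<bar>f1 a\<bar> \<le> M1" using M1 ab by auto
  hence M10: "0 \<le> M1" by (rule order_trans[OF abs_ge_zero])
  have "\<bar>f2 a\<bar> \<le> M2" using M2 ab by auto
  hence M20: "0 \<le> M2" by (rule order_trans[OF abs_ge_zero])
  have cf1T: "continuous_on {0..T} f1"
    by (rule DERIV_continuous_on[of "{0..T}" f1 f2]) (use d2 in blast)
  have cf1: "continuous_on {a..b} f1" by (rule continuous_on_subset[OF cf1T sub])
  have ftc: "(f1 has_integral (f b - f a)) {a..b}"
  proof (rule fundamental_theorem_of_calculus)
    show "a \<le> b" using ab by simp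
    fix x assume x: "x \<in> {a..b}"
    have "(f has_real_derivative f1 x) (at x within {0..T})" using d1 x sub by auto
    hence "(f has_real_derivative f1 x) (at x within {a..b})" by (rule DERIV_subset) (rule sub)
    thus "(f has_vector_derivative f1 x) (at x within {a..b})"
      by (simp add: has_real_derivative_iff_has_vector_derivative)
  qed
  define g where "g s = (exp ((s - b) / \<tau>k) - e) * f1 s" for s
  have ig: "g integrable_on {a..b}" unfolding g_def
    by (intro integrable_continuous_real continuous_intros cf1) (use tau in auto)
  have "integral {a..b} (\<lambda>s. \<beta>k * exp ((s - b) / \<tau>k) * f1 s) - e * \<beta>k * (f b - f a)
        = integral {a..b} (\<lambda>s. \<beta>k * exp ((s - b) / \<tau>k) * f1 s) - integral {a..b} (\<lambda>s. \<beta>k * e * f1 s)"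
    using integral_unique[OF ftc] by simp
  also have "\<dots> = integral {a..b} (\<lambda>s. \<beta>k * exp ((s - b) / \<tau>k) * f1 s - \<beta>k * e * f1 s)"
    by (rule integral_diff[symmetric]) (intro integrable_continuous_real continuous_intros cf1; use tau in auto)+
  also have "\<dots> = integral {a..b} (\<lambda>s. \<beta>k * g s)"
    by (rule integral_cong) (simp add: g_def algebra_simps)
  also have "\<dots> = \<beta>k * integral {a..b} g" by (rule integral_mult_right)
  finally have red: "integral {a..b} (\<lambda>s. \<beta>k * exp ((s - b) / \<tau>k) * f1 s) - e * \<beta>k * (f b - f a)
     = \<beta>k * integral {a..b} g" .
  have bound: "\<bar>integral {a..b} g\<bar> \<le> (if h \<le> 2 * \<tau>k then (M1 / \<tau>k\<^sup>2 + M2 / \<tau>k) * h ^ 3 else h * M1)"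
  proof (cases "h \<le> 2 * \<tau>k")
    case False
    have "norm (integral {a..b} g) \<le> M1 * Henstock_Kurzweil_Integration.content {a..b}"
    proof (rule has_integral_bound_real[OF M10 finite.emptyI integrable_integral[OF ig]])
      fix s assume s: "s \<in> {a..b} - {}"
      have x1: "exp ((s - b) / \<tau>k) \<le> 1" using s tau by (auto simp: field_simps)
      have x2: "exp ((s - b) / \<tau>k) > 0" by simp
      have "\<bar>exp ((s - b) / \<tau>k) - e\<bar> \<le> 1" using x1 x2 e01 unfolding abs_le_iff by linarith
      moreover have "\<bar>f1 s\<bar> \<le> M1" using M1 s sub by auto
      ultimately have "\<bar>exp ((s - b) / \<tau>k) - e\<bar> * \<bar>f1 s\<bar> \<le> 1 * M1"
        by (intro mult_mono) auto
      thus "norm (g s) \<le> M1" unfolding g_def by (simp add: abs_mult)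
    qed
    thus ?thesis using False ab h_def by (simp add: mult.commute)
  next
    case True
    define c where "c = e / \<tau>k * f1 m"
    have m_in: "m \<in> {a..b}" using ab unfolding m_def by auto
    have int_lin: "((\<lambda>s. c * (s - m)) has_integral 0) {a..b}"
    proof -
      have "((\<lambda>s. c * (s - m)) has_integral (c * (b - m)\<^sup>2 / 2 - c * (a - m)\<^sup>2 / 2)) {a..b}"
      proof (rule fundamental_theorem_of_calculus)
        show "a \<le> b" using ab by simp
        fix x assume "x \<in> {a..b}"
        show "((\<lambda>s. c * (s - m)\<^sup>2 / 2) has_vector_derivative c * (x - m)) (at x within {a..b})"
          by (auto intro!: derivative_eq_intros simp: has_real_derivative_iff_has_vector_derivative[symmetric])
      qed
      moreover have "(b - m)\<^sup>2 = (a - m)\<^sup>2" unfolding m_def by (simp add: power2_eq_square field_simps)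
      ultimately show ?thesis by simp
    qed
    have ilin: "(\<lambda>s. c * (s - m)) integrable_on {a..b}" using int_lin by blast
    have "integral {a..b} g = integral {a..b} (\<lambda>s. g s - c * (s - m))"
      using integral_diff[OF ig ilin] integral_unique[OF int_lin] by simp
    moreover have "norm (integral {a..b} (\<lambda>s. g s - c * (s - m))) \<le> ((M1 / \<tau>k\<^sup>2 + M2 / \<tau>k) * h\<^sup>2) * Henstock_Kurzweil_Integration.content {a..b}"
    proof (rule has_integral_bound_real[OF _ finite.emptyI integrable_integral[OF integrable_diff[OF ig ilin]]])
      show "0 \<le> (M1 / \<tau>k\<^sup>2 + M2 / \<tau>k) * h\<^sup>2" using M10 M20 tau by simp
      fix s assume s: "s \<in> {a..b} - {}"
      define d where "d = (s - m) / \<tau>k"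
      have sab: "a \<le> s" "s \<le> b" using s by auto
      have sm: "\<bar>s - m\<bar> \<le> h / 2" using sab unfolding m_def h_def by (simp add: abs_le_iff field_simps)
      have dle: "\<bar>d\<bar> \<le> 1" using sm True tau unfolding d_def by (simp add: abs_div field_simps)
      have ex: "exp ((s - b) / \<tau>k) = e * exp d"
      proof -
        have "(s - b) / \<tau>k = - h / (2 * \<tau>k) + d" unfolding d_def m_def h_def using tau
          by (simp add: field_simps)
        hence "exp ((s - b) / \<tau>k) = exp (- h / (2 * \<tau>k) + d)" by simp
        thus ?thesis unfolding e_def by (simp only: exp_add)
      qed
      have ident: "g s - c * (s - m) = e * (exp d - 1 - d) * f1 s + e / \<tau>k * (s - m) * (f1 s - f1 m)"
        unfolding g_def c_def ex d_def using tau by (simp add: field_simps)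
      have t1: "\<bar>e * (exp d - 1 - d) * f1 s\<bar> \<le> M1 / \<tau>k\<^sup>2 * h\<^sup>2"
      proof -
        have "\<bar>exp d - 1 - d\<bar> \<le> d\<^sup>2" by (rule exp_taylor2[OF dle])
        also have "d\<^sup>2 = (s - m)\<^sup>2 / \<tau>k\<^sup>2" unfolding d_def by (simp add: power_divide)
        also have "\<dots> \<le> h\<^sup>2 / \<tau>k\<^sup>2"
        proof -
          have "(s - m)\<^sup>2 \<le> h\<^sup>2" using sm h0 by (intro power2_le_iff_abs_le[THEN iffD2]) auto
          thus ?thesis by (simp add: divide_right_mono)
        qed
        finally have A: "\<bar>exp d - 1 - d\<bar> \<le> h\<^sup>2 / \<tau>k\<^sup>2" .
        have B: "\<bar>f1 s\<bar> \<le> M1" using M1 s sub by auto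
        have "\<bar>e\<bar> * \<bar>exp d - 1 - d\<bar> * \<bar>f1 s\<bar> \<le> 1 * (h\<^sup>2 / \<tau>k\<^sup>2) * M1"
          by (intro mult_mono A B) (use e01 in auto)
        moreover have "\<bar>e * (exp d - 1 - d) * f1 s\<bar> = \<bar>e\<bar> * \<bar>exp d - 1 - d\<bar> * \<bar>f1 s\<bar>" by (simp only: abs_mult)
        moreover have "1 * (h\<^sup>2 / \<tau>k\<^sup>2) * M1 = M1 / \<tau>k\<^sup>2 * h\<^sup>2" by simp
        ultimately show ?thesis by linarith
      qed
      have t2: "\<bar>e / \<tau>k * (s - m) * (f1 s - f1 m)\<bar> \<le> M2 / \<tau>k * h\<^sup>2"
      proof -
        have L: "\<bar>f1 s - f1 m\<bar> \<le> M2 * \<bar>s - m\<bar>"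
          by (rule deriv_lipschitz[OF d2 M2]) (use s m_in sub in auto)
        have sm': "\<bar>s - m\<bar> \<le> h" using sm h0 by simp
        have "M2 * \<bar>s - m\<bar> \<le> M2 * h" by (rule mult_left_mono[OF sm' M20])
        hence "\<bar>f1 s - f1 m\<bar> \<le> M2 * h" using L by linarith
        moreover have "\<bar>e / \<tau>k\<bar> \<le> 1 / \<tau>k" using e01 tau by (simp add: divide_right_mono)
        ultimately have le: "\<bar>e / \<tau>k\<bar> * \<bar>s - m\<bar> * \<bar>f1 s - f1 m\<bar> \<le> (1 / \<tau>k) * h * (M2 * h)"
          by (intro mult_mono sm') (use tau h0 in auto)
        have e1: "\<bar>e / \<tau>k * (s - m) * (f1 s - f1 m)\<bar> = \<bar>e / \<tau>k\<bar> * \<bar>s - m\<bar> * \<bar>f1 s - f1 m\<bar>" by (simp only: abs_mult)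
        have e3: "(1 / \<tau>k) * h * (M2 * h) = M2 / \<tau>k * h\<^sup>2" by (simp add: power2_eq_square)
        show ?thesis using le unfolding e1 e3 .
      qed
      show "norm (g s - c * (s - m)) \<le> (M1 / \<tau>k\<^sup>2 + M2 / \<tau>k) * h\<^sup>2"
        unfolding ident real_norm_def
      proof -
        have tri: "\<bar>e * (exp d - 1 - d) * f1 s + e / \<tau>k * (s - m) * (f1 s - f1 m)\<bar>
             \<le> \<bar>e * (exp d - 1 - d) * f1 s\<bar> + \<bar>e / \<tau>k * (s - m) * (f1 s - f1 m)\<bar>"
          by (rule abs_triangle_ineq)
        have dist: "(M1 / \<tau>k\<^sup>2 + M2 / \<tau>k) * h\<^sup>2 = M1 / \<tau>k\<^sup>2 * h\<^sup>2 + M2 / \<tau>k * h\<^sup>2"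
          by (rule distrib_right)
        show "\<bar>e * (exp d - 1 - d) * f1 s + e / \<tau>k * (s - m) * (f1 s - f1 m)\<bar>
             \<le> (M1 / \<tau>k\<^sup>2 + M2 / \<tau>k) * h\<^sup>2" by (rule lin_helper[OF tri t1 t2 dist])
      qed
    qed
    ultimately have "\<bar>integral {a..b} g\<bar> \<le> (M1 / \<tau>k\<^sup>2 + M2 / \<tau>k) * h\<^sup>2 * h"
      using ab h_def by simp
    thus ?thesis using True by (simp add: power3_eq_cube power2_eq_square mult.assoc)
  qed
  show ?thesis unfolding red[unfolded e_def h_def] using bound bk unfolding h_def
    by (simp add: abs_mult mult_left_mono)
qed

lemma geo_factor:
  fixes dt tau :: real assumes "dt > 0" "tau > 0"
  shows "exp (- dt / tau) * (1 + tau / dt) + 1 \<le> 1 + tau / dt"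
proof -
  have x: "1 + dt / tau \<le> exp (dt / tau)" by (rule exp_ge_add_one_self)
  have ex: "exp (- dt / tau) * exp (dt / tau) = 1" by (simp flip: exp_add)
  have "exp (- dt / tau) * (1 + dt / tau) \<le> exp (- dt / tau) * exp (dt / tau)"
    by (rule mult_left_mono[OF x]) simp
  hence A: "exp (- dt / tau) * (1 + dt / tau) \<le> 1" by (simp only: ex)
  have "exp (- dt / tau) * (1 + tau / dt) = exp (- dt / tau) * (1 + dt / tau) * (tau / dt)"
    using assms by (simp add: field_simps)
  also have "\<dots> \<le> 1 * (tau / dt)" by (rule mult_right_mono[OF A]) (use assms in simp)
  finally show ?thesis by simp
qed

lemma q_err:
  fixes f f1 f2 :: "real \<Rightarrow> real"
  assumes d1: "\<forall>x\<in>{0..T}. (f has_real_derivative f1 x) (at x within {0..T})"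
    and d2: "\<forall>x\<in>{0..T}. (f1 has_real_derivative f2 x) (at x within {0..T})"
    and M1: "\<forall>x\<in>{0..T}. \<bar>f1 x\<bar> \<le> M1" and M2: "\<forall>x\<in>{0..T}. \<bar>f2 x\<bar> \<le> M2"
    and tau: "\<tau>k > 0" and bk: "\<beta>k > 0" and dt: "dt > 0" and NT: "real NT * dt \<le> T"
  shows "j \<le> NT \<Longrightarrow> \<bar>qdisc \<beta>k \<tau>k dt f (qexact \<beta>k \<tau>k f1 0) j - qexact \<beta>k \<tau>k f1 (real j * dt)\<bar>
         \<le> \<beta>k * (if dt \<le> 2 * \<tau>k then (M1 / \<tau>k\<^sup>2 + M2 / \<tau>k) * dt ^ 3 else dt * M1) * (1 + \<tau>k / dt)"
proof (induction j)
  define Lb where "Lb = (if dt \<le> 2 * \<tau>k then (M1 / \<tau>k\<^sup>2 + M2 / \<tau>k) * dt ^ 3 else dt * M1)"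
  have T0: "0 \<le> T" using NT dt by (meson mult_nonneg_nonneg of_nat_0_le_iff order_trans less_imp_le)
  have "\<bar>f1 0\<bar> \<le> M1" using M1 T0 by auto
  hence M10: "0 \<le> M1" by (rule order_trans[OF abs_ge_zero])
  have "\<bar>f2 0\<bar> \<le> M2" using M2 T0 by auto
  hence M20: "0 \<le> M2" by (rule order_trans[OF abs_ge_zero])
  have Lb0: "0 \<le> Lb" unfolding Lb_def using M10 M20 tau dt by simp
  {
    case 0
    have "0 \<le> \<beta>k * Lb * (1 + \<tau>k / dt)" using bk Lb0 tau dt by simp
    thus ?case unfolding Lb_def by simp
  next
    case (Suc j)
    define a where "a = real j * dt"
    define b where "b = real (Suc j) * dt"
    define e where "e = exp (- dt / (2 * \<tau>k))"
    have bma: "b - a = dt" unfolding a_def b_def by (simp add: algebra_simps)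
    have ab: "0 \<le> a" "a < b" "b \<le> T"
    proof -
      show "0 \<le> a" unfolding a_def using dt by simp
      show "a < b" using bma dt by simp
      have "real (Suc j) * dt \<le> real NT * dt" using Suc.prems dt by (intro mult_right_mono) auto
      thus "b \<le> T" unfolding b_def using NT by simp
    qed
    have IH: "\<bar>qdisc \<beta>k \<tau>k dt f (qexact \<beta>k \<tau>k f1 0) j - qexact \<beta>k \<tau>k f1 a\<bar> \<le> \<beta>k * Lb * (1 + \<tau>k / dt)"
      using Suc.IH Suc.prems unfolding a_def Lb_def by simp
    have cf1T: "continuous_on {0..T} f1"
      by (rule DERIV_continuous_on[of "{0..T}" f1 f2]) (use d2 in blast)
    have qs: "qexact \<beta>k \<tau>k f1 b = exp (- dt / \<tau>k) * qexact \<beta>k \<tau>k f1 a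
           + integral {a..b} (\<lambda>s. \<beta>k * exp ((s - b) / \<tau>k) * f1 s)"
      using q_step[OF cf1T ab(1) less_imp_le[OF ab(2)] ab(3) tau, of \<beta>k] bma by simp
    have le: "\<bar>integral {a..b} (\<lambda>s. \<beta>k * exp ((s - b) / \<tau>k) * f1 s) - e * \<beta>k * (f b - f a)\<bar> \<le> \<beta>k * Lb"
      using local_err[OF d1 d2 M1 M2 ab tau bk] unfolding bma Lb_def e_def .
    have e2: "e\<^sup>2 = exp (- dt / \<tau>k)"
    proof -
      have "e\<^sup>2 = exp (- dt / (2 * \<tau>k) + - dt / (2 * \<tau>k))" unfolding e_def power2_eq_square exp_add ..
      also have "- dt / (2 * \<tau>k) + - dt / (2 * \<tau>k) = - dt / \<tau>k" by (simp add: field_simps)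
      finally show ?thesis .
    qed
    have qd: "qdisc \<beta>k \<tau>k dt f (qexact \<beta>k \<tau>k f1 0) (Suc j) = exp (- dt / \<tau>k) * qdisc \<beta>k \<tau>k dt f (qexact \<beta>k \<tau>k f1 0) j + e * \<beta>k * (f b - f a)"
      unfolding qdisc.simps e2[symmetric] a_def b_def e_def by simp
    define E where "E = exp (- dt / \<tau>k)"
    define X where "X = qdisc \<beta>k \<tau>k dt f (qexact \<beta>k \<tau>k f1 0) j - qexact \<beta>k \<tau>k f1 a"
    define Y where "Y = integral {a..b} (\<lambda>s. \<beta>k * exp ((s - b) / \<tau>k) * f1 s) - e * \<beta>k * (f b - f a)"
    have E0: "0 \<le> E" unfolding E_def by simp
    have eq: "qdisc \<beta>k \<tau>k dt f (qexact \<beta>k \<tau>k f1 0) (Suc j) - qexact \<beta>k \<tau>k f1 b = E * X - Y"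
      unfolding qd qs X_def Y_def E_def by (simp add: algebra_simps)
    have "\<bar>E * X - Y\<bar> \<le> E * \<bar>X\<bar> + \<bar>Y\<bar>"
      using abs_triangle_ineq4[of "E * X" Y] E0 by (simp add: abs_mult)
    also have "\<dots> \<le> E * (\<beta>k * Lb * (1 + \<tau>k / dt)) + \<beta>k * Lb"
      by (intro add_mono mult_left_mono E0) (use IH le in \<open>simp_all add: X_def Y_def\<close>)
    also have "\<dots> = \<beta>k * Lb * (E * (1 + \<tau>k / dt) + 1)" by (simp add: algebra_simps)
    also have "\<dots> \<le> \<beta>k * Lb * (1 + \<tau>k / dt)"
      by (rule mult_left_mono) (use geo_factor[OF dt tau] bk Lb0 in \<open>simp_all add: E_def\<close>)
    finally show ?case using eq unfolding b_def Lb_def by simp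
  }
qed

lemma const_bound:
  fixes dt tau beta M1 M2 W :: real
  assumes dt: "dt > 0" and tau: "tau > 0" and b: "beta > 0"
    and M: "0 \<le> M1" "0 \<le> M2" "M1 \<le> W" "M2 \<le> W"
  shows "beta * (if dt \<le> 2 * tau then (M1 / tau\<^sup>2 + M2 / tau) * dt ^ 3 else dt * M1) * (1 + tau / dt)
         \<le> 3 * beta * (1 / tau + 1) * dt\<^sup>2 * W"
proof -
  have W0: "0 \<le> W" using M by linarith
  have key: "(if dt \<le> 2 * tau then (M1 / tau\<^sup>2 + M2 / tau) * dt ^ 3 else dt * M1) * (1 + tau / dt)
         \<le> 3 * (1 / tau + 1) * dt\<^sup>2 * W"
  proof (cases "dt \<le> 2 * tau")
    case True
    have "(M1 / tau\<^sup>2 + M2 / tau) \<le> (W / tau\<^sup>2 + W / tau)"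
      using M tau by (intro add_mono divide_right_mono) auto
    hence "(M1 / tau\<^sup>2 + M2 / tau) * (dt ^ 3 * (1 + tau / dt)) \<le> (W / tau\<^sup>2 + W / tau) * (dt ^ 3 * (1 + tau / dt))"
      by (rule mult_right_mono) (use dt tau in simp)
    also have eq3: "dt ^ 3 * (1 + tau / dt) = dt\<^sup>2 * (dt + tau)"
      using dt by (simp add: field_simps power2_eq_square power3_eq_cube)
    also have "(W / tau\<^sup>2 + W / tau) * (dt\<^sup>2 * (dt + tau)) \<le> (W / tau\<^sup>2 + W / tau) * (dt\<^sup>2 * (3 * tau))"
      using True W0 tau by (intro mult_left_mono) auto
    also have "(W / tau\<^sup>2 + W / tau) * (dt\<^sup>2 * (3 * tau)) = 3 * (1 / tau + 1) * dt\<^sup>2 * W"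
      using tau by (simp add: field_simps power2_eq_square)
    finally show ?thesis using True eq3 by (simp add: mult.assoc)
  next
    case False
    have "dt * M1 * (1 + tau / dt) \<le> dt * W * (1 + tau / dt)"
      using M dt tau by (intro mult_right_mono mult_left_mono) auto
    also have "dt * W * (1 + tau / dt) = W * (dt + tau)" using dt by (simp add: field_simps)
    also have "W * (dt + tau) \<le> W * (2 * dt)" using False W0 tau by (intro mult_left_mono) auto
    also have "W * (2 * dt) \<le> W * (3 * (1 / tau) * dt\<^sup>2)"
    proof (rule mult_left_mono[OF _ W0])
      have "2 < dt / tau" using False tau by (simp add: field_simps)
      hence "2 * dt \<le> (dt / tau) * dt" using dt by (intro mult_right_mono) auto
      also have "\<dots> \<le> 3 * (1 / tau) * dt\<^sup>2" using dt tau by (simp add: power2_eq_square field_simps)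
      finally show "2 * dt \<le> 3 * (1 / tau) * dt\<^sup>2" .
    qed
    also have "W * (3 * (1 / tau) * dt\<^sup>2) \<le> 3 * (1 / tau + 1) * dt\<^sup>2 * W"
      using W0 tau dt by (simp add: algebra_simps)
    finally show ?thesis using False by simp
  qed
  have "beta * ((if dt \<le> 2 * tau then (M1 / tau\<^sup>2 + M2 / tau) * dt ^ 3 else dt * M1) * (1 + tau / dt))
         \<le> beta * (3 * (1 / tau + 1) * dt\<^sup>2 * W)"
    by (rule mult_left_mono[OF key]) (use b in simp)
  thus ?thesis by (simp only: ac_simps)
qed

lemma decomp_helper:
  fixes D P Sq Se Sd b c :: real
  assumes "D = P + Sq" "Sd = Sq - Se"
  shows "D - c = (P - b) + Sd + (b + Se - c)"
  using assms by simp

lemma sum3_helper: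
  fixes x a b c A B Cc R :: real
  assumes "x = a + b + c" "\<bar>a\<bar> \<le> A" "\<bar>b\<bar> \<le> B" "\<bar>c\<bar> \<le> Cc" "A + B + Cc \<le> R"
  shows "\<bar>x\<bar> \<le> R"
  using assms by linarith

theorem theorem1:
  fixes \<alpha> :: real and N :: nat and \<beta> \<tau> :: "nat \<Rightarrow> real"
  assumes "0 < \<alpha>" and "\<alpha> < 1" and "N \<ge> 1"
    and "\<forall>k\<in>{0..N}. \<beta> k > 0"
    and "\<forall>k\<in>{1..N}. \<tau> k > 0"
  shows "\<exists>C>0. \<forall>(T::real) (f::real\<Rightarrow>real) f1 f2 f3 (NT::nat) (n::nat).
     (T > 0
      \<and> (\<forall>x\<in>{0..T}. (f has_real_derivative f1 x) (at x within {0..T}))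
      \<and> (\<forall>x\<in>{0..T}. (f1 has_real_derivative f2 x) (at x within {0..T}))
      \<and> f3 integrable_on {0..T}
      \<and> bdd_above ((\<lambda>s. \<bar>f3 s\<bar>) ` {0..T})
      \<and> (\<forall>x\<in>{0..T}. f2 x = f2 0 + integral {0..x} f3)
      \<and> NT \<ge> 1 \<and> n \<in> {1..NT})
     \<longrightarrow>
     (let dt = T / real NT in
      \<bar>Dhat N \<beta> \<tau> dt f f1 n - caputo \<alpha> f1 (real n * dt)\<bar>
        \<le> Linf_norm T (eps \<alpha> N \<beta> \<tau>) * (\<bar>f1 0\<bar> + L1_norm T f2)
          + dt * (\<beta> 0 / 2 + C * dt) * W3inf_norm T f f1 f2 f3)"
proof -
  have a: "0 < \<alpha>" "\<alpha> < 1" using assms(1,2) by auto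
  have tau: "\<forall>k\<in>{1..N}. \<tau> k > 0" using assms(5) .
  have tau': "\<And>k. Suc 0 \<le> k \<Longrightarrow> k \<le> N \<Longrightarrow> \<tau> k \<noteq> 0" using tau by force
  have bpos: "\<And>k. k \<in> {0..N} \<Longrightarrow> \<beta> k > 0" using assms(4) by blast
  define CS where "CS = (\<Sum>k=1..N. 3 * \<beta> k * (1 / \<tau> k + 1))"
  have CS0: "0 \<le> CS" unfolding CS_def
  proof (rule sum_nonneg)
    fix k assume k: "k \<in> {1..N}"
    have "\<beta> k > 0" using bpos k by auto
    moreover have "\<tau> k > 0" using bspec[OF tau k] .
    ultimately show "0 \<le> 3 * \<beta> k * (1 / \<tau> k + 1)" by simp
  qed
  define C where "C = 1 + CS"
  show ?thesis
  proof (intro exI[of _ C] conjI allI impI)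
    show "C > 0" using CS0 unfolding C_def by simp
    fix T :: real and f f1 f2 f3 :: "real \<Rightarrow> real" and NT n :: nat
    assume H: "T > 0
      \<and> (\<forall>x\<in>{0..T}. (f has_real_derivative f1 x) (at x within {0..T}))
      \<and> (\<forall>x\<in>{0..T}. (f1 has_real_derivative f2 x) (at x within {0..T}))
      \<and> f3 integrable_on {0..T}
      \<and> bdd_above ((\<lambda>s. \<bar>f3 s\<bar>) ` {0..T})
      \<and> (\<forall>x\<in>{0..T}. f2 x = f2 0 + integral {0..x} f3)
      \<and> NT \<ge> 1 \<and> n \<in> {1..NT}"
    have T: "T > 0" using H by blast
    have d1: "\<forall>x\<in>{0..T}. (f has_real_derivative f1 x) (at x within {0..T})" using H by blast
    have d2: "\<forall>x\<in>{0..T}. (f1 has_real_derivative f2 x) (at x within {0..T})" using H by blast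
    have i3: "f3 integrable_on {0..T}" using H by blast
    have f2eq: "\<forall>x\<in>{0..T}. f2 x = f2 0 + integral {0..x} f3" using H by blast
    have NT1: "NT \<ge> 1" using H by blast
    have nin: "n \<in> {1..NT}" using H by blast
    hence n: "1 \<le> n" "n \<le> NT" by auto
    define dt where "dt = T / real NT"
    define t where "t = real n * dt"
    have dt: "dt > 0" unfolding dt_def using T NT1 by simp
    have NTdt: "real NT * dt = T" unfolding dt_def using NT1 by simp
    have NTdt': "real NT * dt \<le> T" using NTdt by simp
    have tpos: "0 < t" unfolding t_def using n dt by simp
    have tle: "t \<le> T"
    proof -
      have "real n * dt \<le> real NT * dt" using n dt by (intro mult_right_mono) auto
      thus ?thesis unfolding t_def NTdt .
    qed
    have cf1: "continuous_on {0..T} f1"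
      by (rule DERIV_continuous_on[of "{0..T}" f1 f2]) (use d2 in blast)
    have "continuous_on {0..T} (\<lambda>x. f2 0 + integral {0..x} f3)"
      by (intro continuous_intros indefinite_integral_continuous_1 i3)
    moreover have "continuous_on {0..T} f2 = continuous_on {0..T} (\<lambda>x. f2 0 + integral {0..x} f3)"
      by (rule continuous_on_cong[OF refl]) (use f2eq in blast)
    ultimately have cf2: "continuous_on {0..T} f2" by simp
    have cpw: "continuous_on {0..T} (\<lambda>z. z powr (1 - \<alpha>))"
      by (rule continuous_on_powr') (use a in \<open>auto intro: continuous_intros\<close>)
    have G2pos: "Gamma (2 - \<alpha>) > 0" using a by (intro Gamma_real_pos) simp
    have cK: "continuous_on {0..T} (\<lambda>z. z powr (1 - \<alpha>) / Gamma (2 - \<alpha>))"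
      by (rule continuous_on_divide[OF cpw continuous_on_const]) (use G2pos in auto)
    have cS: "continuous_on {0..T} (\<lambda>z. \<Sum>k=1..N. \<beta> k * \<tau> k * (exp (- z / \<tau> k) - 1))"
      by (intro continuous_intros) (auto dest: tau')
    have ceps: "continuous_on {0..T} (eps \<alpha> N \<beta> \<tau>)" unfolding eps_def[abs_def]
      by (rule continuous_on_add[OF continuous_on_diff[OF cK continuous_on_const] cS])
    define M1 where "M1 = Linf_norm T f1"
    define M2 where "M2 = Linf_norm T f2"
    define E where "E = Linf_norm T (eps \<alpha> N \<beta> \<tau>)"
    define W where "W = W3inf_norm T f f1 f2 f3"
    have M1b: "\<forall>x\<in>{0..T}. \<bar>f1 x\<bar> \<le> M1" unfolding M1_def using Linf_ge[OF cf1] by blast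
    have M2b: "\<forall>x\<in>{0..T}. \<bar>f2 x\<bar> \<le> M2" unfolding M2_def using Linf_ge[OF cf2] by blast
    have Eb: "\<forall>z\<in>{0..T}. \<bar>eps \<alpha> N \<beta> \<tau> z\<bar> \<le> E" unfolding E_def using Linf_ge[OF ceps] by blast
    have "\<bar>f1 0\<bar> \<le> M1" using M1b T by auto
    hence M10: "0 \<le> M1" by (rule order_trans[OF abs_ge_zero])
    have "\<bar>f2 0\<bar> \<le> M2" using M2b T by auto
    hence M20: "0 \<le> M2" by (rule order_trans[OF abs_ge_zero])
    have M1W: "M1 \<le> W" and M2W: "M2 \<le> W" unfolding W_def W3inf_norm_def M1_def M2_def by auto
    have W0: "0 \<le> W" using M1W M10 by linarith
    have PA: "\<bar>\<beta> 0 * f1 t + (\<Sum>k=1..N. qexact (\<beta> k) (\<tau> k) f1 t) - caputo \<alpha> f1 t\<bar>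
          \<le> E * (\<bar>f1 0\<bar> + L1_norm T f2)"
      by (rule partA[OF d2 cf2 tpos tle a tau Eb])
    define a0 where "a0 = real (n - 1) * dt"
    have ta0: "t - a0 = dt" unfolding t_def a0_def using n by (simp add: of_nat_diff algebra_simps)
    have a00: "0 \<le> a0" unfolding a0_def using dt by simp
    have tay: "\<bar>f t - f a0 - (t - a0) * f1 t\<bar> \<le> M2 * (t - a0)\<^sup>2 / 2"
      by (rule taylor1[OF d1 d2 M2b a00 _ tle]) (use ta0 dt in simp)
    have b0: "\<beta> 0 > 0" using bpos by simp
    have PB1: "\<bar>\<beta> 0 / dt * (f t - f a0) - \<beta> 0 * f1 t\<bar> \<le> \<beta> 0 * dt * M2 / 2"
    proof -
      have "\<beta> 0 / dt * (f t - f a0) - \<beta> 0 * f1 t = (\<beta> 0 / dt) * (f t - f a0 - (t - a0) * f1 t)"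
        unfolding ta0 using dt by (simp add: field_simps)
      hence "\<bar>\<beta> 0 / dt * (f t - f a0) - \<beta> 0 * f1 t\<bar> = (\<beta> 0 / dt) * \<bar>f t - f a0 - (t - a0) * f1 t\<bar>"
        using b0 dt by (simp add: abs_mult)
      also have "\<dots> \<le> (\<beta> 0 / dt) * (M2 * (t - a0)\<^sup>2 / 2)"
        by (rule mult_left_mono[OF tay]) (use b0 dt in simp)
      also have "\<dots> = \<beta> 0 * dt * M2 / 2" unfolding ta0 using dt by (simp add: field_simps power2_eq_square)
      finally show ?thesis .
    qed
    have PB2: "\<bar>\<Sum>k=1..N. qdisc (\<beta> k) (\<tau> k) dt f (qexact (\<beta> k) (\<tau> k) f1 0) n - qexact (\<beta> k) (\<tau> k) f1 t\<bar>
          \<le> CS * dt\<^sup>2 * W"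
    proof -
      have "\<bar>\<Sum>k=1..N. qdisc (\<beta> k) (\<tau> k) dt f (qexact (\<beta> k) (\<tau> k) f1 0) n - qexact (\<beta> k) (\<tau> k) f1 t\<bar>
          \<le> (\<Sum>k=1..N. \<bar>qdisc (\<beta> k) (\<tau> k) dt f (qexact (\<beta> k) (\<tau> k) f1 0) n - qexact (\<beta> k) (\<tau> k) f1 t\<bar>)"
        by (rule sum_abs)
      also have "\<dots> \<le> (\<Sum>k=1..N. 3 * \<beta> k * (1 / \<tau> k + 1) * dt\<^sup>2 * W)"
      proof (rule sum_mono)
        fix k assume k: "k \<in> {1..N}"
        have tk: "\<tau> k > 0" using bspec[OF tau k] .
        have bk: "\<beta> k > 0" using bpos k by auto
        have "\<bar>qdisc (\<beta> k) (\<tau> k) dt f (qexact (\<beta> k) (\<tau> k) f1 0) n - qexact (\<beta> k) (\<tau> k) f1 (real n * dt)\<bar>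
          \<le> \<beta> k * (if dt \<le> 2 * \<tau> k then (M1 / (\<tau> k)\<^sup>2 + M2 / \<tau> k) * dt ^ 3 else dt * M1) * (1 + \<tau> k / dt)"
          by (rule q_err[OF d1 d2 M1b M2b tk bk dt NTdt' n(2)])
        also have "\<dots> \<le> 3 * \<beta> k * (1 / \<tau> k + 1) * dt\<^sup>2 * W"
          by (rule const_bound[OF dt tk bk M10 M20 M1W M2W])
        finally show "\<bar>qdisc (\<beta> k) (\<tau> k) dt f (qexact (\<beta> k) (\<tau> k) f1 0) n - qexact (\<beta> k) (\<tau> k) f1 t\<bar>
          \<le> 3 * \<beta> k * (1 / \<tau> k + 1) * dt\<^sup>2 * W" unfolding t_def .
      qed
      also have "\<dots> = CS * dt\<^sup>2 * W" unfolding CS_def by (simp add: sum_distrib_right)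
      finally show ?thesis .
    qed
    have decomp: "Dhat N \<beta> \<tau> dt f f1 n - caputo \<alpha> f1 t
       = (\<beta> 0 / dt * (f t - f a0) - \<beta> 0 * f1 t)
         + (\<Sum>k=1..N. qdisc (\<beta> k) (\<tau> k) dt f (qexact (\<beta> k) (\<tau> k) f1 0) n - qexact (\<beta> k) (\<tau> k) f1 t)
         + (\<beta> 0 * f1 t + (\<Sum>k=1..N. qexact (\<beta> k) (\<tau> k) f1 t) - caputo \<alpha> f1 t)"
    proof (rule decomp_helper)
      show "Dhat N \<beta> \<tau> dt f f1 n = \<beta> 0 / dt * (f t - f a0) + (\<Sum>k=1..N. qdisc (\<beta> k) (\<tau> k) dt f (qexact (\<beta> k) (\<tau> k) f1 0) n)"
        unfolding Dhat_def t_def a0_def ..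
      show "(\<Sum>k=1..N. qdisc (\<beta> k) (\<tau> k) dt f (qexact (\<beta> k) (\<tau> k) f1 0) n - qexact (\<beta> k) (\<tau> k) f1 t)
          = (\<Sum>k=1..N. qdisc (\<beta> k) (\<tau> k) dt f (qexact (\<beta> k) (\<tau> k) f1 0) n) - (\<Sum>k=1..N. qexact (\<beta> k) (\<tau> k) f1 t)"
        by (rule sum_subtractf)
    qed
    have fin1: "\<beta> 0 * dt * M2 / 2 \<le> dt * (\<beta> 0 / 2) * W"
    proof -
      have "\<beta> 0 * dt * M2 \<le> \<beta> 0 * dt * W" using M2W b0 dt by (intro mult_left_mono) auto
      hence "\<beta> 0 * dt * M2 / 2 \<le> \<beta> 0 * dt * W / 2" by (rule divide_right_mono) simp
      also have "\<beta> 0 * dt * W / 2 = dt * (\<beta> 0 / 2) * W" by simp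
      finally show ?thesis .
    qed
    have fin2: "CS * dt\<^sup>2 * W \<le> dt * (C * dt) * W"
    proof -
      have "CS * (dt\<^sup>2 * W) \<le> C * (dt\<^sup>2 * W)" unfolding C_def using W0 by (intro mult_right_mono) auto
      thus ?thesis by (simp add: power2_eq_square ac_simps)
    qed
    have "\<bar>Dhat N \<beta> \<tau> dt f f1 n - caputo \<alpha> f1 t\<bar>
        \<le> E * (\<bar>f1 0\<bar> + L1_norm T f2) + dt * (\<beta> 0 / 2 + C * dt) * W"
    proof (rule sum3_helper[OF decomp PB1 PB2 PA])
      show "\<beta> 0 * dt * M2 / 2 + CS * dt\<^sup>2 * W + E * (\<bar>f1 0\<bar> + L1_norm T f2)
          \<le> E * (\<bar>f1 0\<bar> + L1_norm T f2) + dt * (\<beta> 0 / 2 + C * dt) * W"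
        using fin1 fin2 by (simp add: distrib_left distrib_right)
    qed
    thus "let dt = T / real NT in
      \<bar>Dhat N \<beta> \<tau> dt f f1 n - caputo \<alpha> f1 (real n * dt)\<bar>
        \<le> Linf_norm T (eps \<alpha> N \<beta> \<tau>) * (\<bar>f1 0\<bar> + L1_norm T f2)
          + dt * (\<beta> 0 / 2 + C * dt) * W3inf_norm T f f1 f2 f3"
      unfolding Let_def dt_def[symmetric] t_def[symmetric] E_def W_def .
  qed
qed

end
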